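(* Let $G$ be an oriented graph derived from a Burling tree $(T,r,\ell,c)$, and let $u,v,w$ be three distinct vertices of $G$ appearing in this order along a branch of $T$. Then every path (not necessarily directed) in $G$ from $u$ to $w$ goes through an in-neighbor of $v$ in $G$. In particular, $N^-[v]$ is a full in-star cutset of $G$ and $N[v]$ is a full star cutset of $G$, each of which separates $u$ and $w$.
   Context: Oriented graphs are finite, without loops, multiple arcs or pairs of opposite arcs; paths and connectivity in an oriented graph refer to its underlying graph. In a rooted tree $T$ with root $r$, each non-root vertex $v$ has a parent $p(v)$; children, leaves, ancestors and descendants are as usual. A branch is a sequence $v_1\dots v_k$ ($k\ge0$) with $v_i$ the parent of $v_{i+1}$; it starts at $v_1$. A Burling tree is a 4-tuple $(T,r,\ell,c)$: $T$ a rooted tree with root $r$; $\ell$ assigns to each non-leaf vertex $v$ one of its children $\ell(v)$ (the last-born of $v$); $c$ assigns to every vertex $v$ that is neither the root nor a last-born the vertex-set of a (possibly empty) branch starting at $\ell(p(v))$, and $c(v)=\emptyset$ if $v$ is the root or a last-born. The oriented graph fully derived from it has vertex-set $V(T)$ and an arc $uv$ iff $v\in c(u)$; an oriented graph is derived from the Burling tree if it is an induced subgraph of the fully derived one. $N^-[v]$ is $v$ together with its in-neighbors, and $N[v]$ is $v$ together with all its neighbors. A full in-star cutset of $G$ is a set $N^-[v]$ such that $G\setminus N^-[v]$ is disconnected; a full star cutset is a set $N[v]$ such that $G\setminus N[v]$ is disconnected. A set $S$ separates $u$ and $w$ if $u$ and $w$ lie in distinct connected components of $G\setminus S$. *)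

theory Defs
  imports Main
begin

text \<open>The parent function p is only meaningful on non-root vertices.
  Acyclicity: every vertex reaches the root by iterating p.\<close>
definition rooted_tree :: "'a set \<Rightarrow> 'a \<Rightarrow> ('a \<Rightarrow> 'a) \<Rightarrow> bool" where
  "rooted_tree V r p \<longleftrightarrow> finite V \<and> r \<in> V \<and> (\<forall>v\<in>V - {r}. p v \<in> V)
     \<and> (\<forall>v\<in>V. \<exists>n. (p ^^ n) v = r)"

definition children :: "'a set \<Rightarrow> 'a \<Rightarrow> ('a \<Rightarrow> 'a) \<Rightarrow> 'a \<Rightarrow> 'a set" where
  "children V r p v = {u \<in> V. u \<noteq> r \<and> p u = v}"

definition is_branch :: "'a set \<Rightarrow> 'a \<Rightarrow> ('a \<Rightarrow> 'a) \<Rightarrow> 'a list \<Rightarrow> bool" where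
  "is_branch V r p xs \<longleftrightarrow> set xs \<subseteq> V \<and>
     (\<forall>i. Suc i < length xs \<longrightarrow> xs ! Suc i \<noteq> r \<and> p (xs ! Suc i) = xs ! i)"

definition last_born :: "'a \<Rightarrow> ('a \<Rightarrow> 'a) \<Rightarrow> ('a \<Rightarrow> 'a) \<Rightarrow> 'a \<Rightarrow> bool" where
  "last_born r p l v \<longleftrightarrow> v \<noteq> r \<and> v = l (p v)"

definition burling_tree ::
  "'a set \<Rightarrow> 'a \<Rightarrow> ('a \<Rightarrow> 'a) \<Rightarrow> ('a \<Rightarrow> 'a) \<Rightarrow> ('a \<Rightarrow> 'a set) \<Rightarrow> bool" where
  "burling_tree V r p l c \<longleftrightarrow> rooted_tree V r p
     \<and> (\<forall>v\<in>V. children V r p v \<noteq> {} \<longrightarrow> l v \<in> children V r p v)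
     \<and> (\<forall>v\<in>V. (v = r \<or> last_born r p l v) \<longrightarrow> c v = {})
     \<and> (\<forall>v\<in>V. v \<noteq> r \<and> \<not> last_born r p l v \<longrightarrow>
          (\<exists>xs. is_branch V r p xs \<and> (xs \<noteq> [] \<longrightarrow> hd xs = l (p v)) \<and> c v = set xs))"

definition derived_arcs :: "'a set \<Rightarrow> ('a \<Rightarrow> 'a set) \<Rightarrow> 'a \<Rightarrow> 'a \<Rightarrow> bool" where
  "derived_arcs S c x y \<longleftrightarrow> x \<in> S \<and> y \<in> S \<and> y \<in> c x"

definition adj :: "('a \<Rightarrow> 'a \<Rightarrow> bool) \<Rightarrow> 'a \<Rightarrow> 'a \<Rightarrow> bool" where
  "adj E x y \<longleftrightarrow> E x y \<or> E y x"

definition is_path :: "'a set \<Rightarrow> ('a \<Rightarrow> 'a \<Rightarrow> bool) \<Rightarrow> 'a list \<Rightarrow> bool" where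
  "is_path S E xs \<longleftrightarrow> xs \<noteq> [] \<and> set xs \<subseteq> S \<and> distinct xs \<and>
     (\<forall>i. Suc i < length xs \<longrightarrow> adj E (xs ! i) (xs ! Suc i))"

definition connected_in :: "'a set \<Rightarrow> ('a \<Rightarrow> 'a \<Rightarrow> bool) \<Rightarrow> 'a \<Rightarrow> 'a \<Rightarrow> bool" where
  "connected_in S E a b \<longleftrightarrow> (\<exists>xs. is_path S E xs \<and> hd xs = a \<and> last xs = b)"

definition disconnected :: "'a set \<Rightarrow> ('a \<Rightarrow> 'a \<Rightarrow> bool) \<Rightarrow> bool" where
  "disconnected S E \<longleftrightarrow> (\<exists>a\<in>S. \<exists>b\<in>S. \<not> connected_in S E a b)"

definition in_nbrs :: "'a set \<Rightarrow> ('a \<Rightarrow> 'a \<Rightarrow> bool) \<Rightarrow> 'a \<Rightarrow> 'a set" where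
  "in_nbrs S E v = {x \<in> S. E x v}"

definition closed_in_nbhd :: "'a set \<Rightarrow> ('a \<Rightarrow> 'a \<Rightarrow> bool) \<Rightarrow> 'a \<Rightarrow> 'a set" where
  "closed_in_nbhd S E v = insert v (in_nbrs S E v)"

definition closed_nbhd :: "'a set \<Rightarrow> ('a \<Rightarrow> 'a \<Rightarrow> bool) \<Rightarrow> 'a \<Rightarrow> 'a set" where
  "closed_nbhd S E v = insert v {x \<in> S. adj E x v}"

definition full_in_star_cutset :: "'a set \<Rightarrow> ('a \<Rightarrow> 'a \<Rightarrow> bool) \<Rightarrow> 'a set \<Rightarrow> bool" where
  "full_in_star_cutset S E X \<longleftrightarrow>
     (\<exists>v\<in>S. X = closed_in_nbhd S E v \<and> disconnected (S - X) E)"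

definition full_star_cutset :: "'a set \<Rightarrow> ('a \<Rightarrow> 'a \<Rightarrow> bool) \<Rightarrow> 'a set \<Rightarrow> bool" where
  "full_star_cutset S E X \<longleftrightarrow>
     (\<exists>v\<in>S. X = closed_nbhd S E v \<and> disconnected (S - X) E)"

definition separates :: "'a set \<Rightarrow> ('a \<Rightarrow> 'a \<Rightarrow> bool) \<Rightarrow> 'a set \<Rightarrow> 'a \<Rightarrow> 'a \<Rightarrow> bool" where
  "separates S E X a b \<longleftrightarrow> a \<in> S - X \<and> b \<in> S - X \<and> \<not> connected_in (S - X) E a b"

end

theory Submission
  imports Defs
begin

definition dsc :: "('a \<Rightarrow> 'a) \<Rightarrow> 'a \<Rightarrow> 'a \<Rightarrow> 'a \<Rightarrow> nat \<Rightarrow> bool" where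
  "dsc p r y a n \<longleftrightarrow> (p ^^ n) y = a \<and> (\<forall>m<n. (p ^^ m) y \<noteq> r)"

lemma dsc_trans:
  assumes "dsc p r y a n" "dsc p r a b k" shows "dsc p r y b (n + k)"
proof -
  have e: "(p ^^ (k + n)) y = (p ^^ k) ((p ^^ n) y)" for k by (simp add: funpow_add)
  have "(p ^^ (n + k)) y = b" using assms e[of k] by (simp add: dsc_def add.commute)
  moreover have "(p ^^ m) y \<noteq> r" if "m < n + k" for m
  proof (cases "m < n")
    case True then show ?thesis using assms by (simp add: dsc_def)
  next
    case False
    then have "(p ^^ m) y = (p ^^ (m - n)) a" using e[of "m - n"] assms by (simp add: dsc_def)
    then show ?thesis using assms that False by (simp add: dsc_def)
  qed
  ultimately show ?thesis by (simp add: dsc_def)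
qed

lemma dsc_cmp:
  assumes "dsc p r z a t" "dsc p r z b n" "n \<le> t" shows "dsc p r b a (t - n)"
proof -
  have e: "(p ^^ (k + n)) z = (p ^^ k) ((p ^^ n) z)" for k by (simp add: funpow_add)
  have "(p ^^ (t - n)) b = a" using assms e[of "t - n"] by (simp add: dsc_def)
  moreover have "(p ^^ m) b \<noteq> r" if "m < t - n" for m
    using e[of m] assms that by (auto simp: dsc_def)
  ultimately show ?thesis by (simp add: dsc_def)
qed

lemma dsc_zero: "dsc p r y a 0 \<longleftrightarrow> y = a" by (simp add: dsc_def)

lemma dsc_one: "y \<noteq> r \<Longrightarrow> dsc p r y (p y) 1" by (simp add: dsc_def)

lemma nocycle:
  assumes "rooted_tree V r p" "x \<in> V" "dsc p r x x k" "k > 0" shows False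
proof -
  have "(p ^^ N) x \<noteq> r" for N
  proof (induction N rule: less_induct)
    case (less N)
    show ?case
    proof (cases "N < k")
      case True then show ?thesis using assms by (simp add: dsc_def)
    next
      case False
      have "(p ^^ ((N - k) + k)) x = (p ^^ (N - k)) ((p ^^ k) x)" by (simp add: funpow_add)
      then have "(p ^^ N) x = (p ^^ (N - k)) x" using False assms by (simp add: dsc_def)
      then show ?thesis using less assms False by simp
    qed
  qed
  then show False using assms unfolding rooted_tree_def by blast
qed

lemma branch_dsc:
  assumes "is_branch V r p xs" "a + s < length xs"
  shows "dsc p r (xs ! (a + s)) (xs ! a) s"
  using assms(2)
proof (induction s)
  case 0 then show ?case by (simp add: dsc_def)
next
  case (Suc s)
  have "dsc p r (xs ! (a + Suc s)) (xs ! (a + s)) 1"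
    using assms(1) Suc.prems unfolding is_branch_def dsc_def by auto
  from dsc_trans[OF this Suc.IH] Suc.prems show ?case by simp
qed

lemma sib:
  assumes "rooted_tree V r p" "a \<in> V" "b \<in> V" "a \<noteq> r" "b \<noteq> r" "p a = p b"
    "dsc p r a b e" shows "a = b"
proof (cases "e = 0")
  case True then show ?thesis using assms by (simp add: dsc_def)
next
  case False
  have "dsc p r (p a) b (e - 1)" using dsc_cmp[OF assms(7) dsc_one[OF assms(4)]] False by simp
  from dsc_trans[OF this dsc_one[OF assms(5)]] have "dsc p r (p a) (p a) e"
    using False assms(6) by simp
  moreover have "p a \<in> V" using assms unfolding rooted_tree_def by auto
  ultimately show ?thesis using nocycle[OF assms(1)] False by blast
qed

lemma burl:
  assumes "burling_tree V r p l c" "x \<in> V" "y \<in> c x"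
  shows "x \<noteq> r \<and> \<not> last_born r p l x \<and>
    (\<exists>xs t. is_branch V r p xs \<and> t < length xs \<and> xs ! t = y \<and> xs ! 0 = l (p x) \<and> set xs = c x)
    \<and> l (p x) \<in> V \<and> l (p x) \<noteq> r \<and> p (l (p x)) = p x \<and> p x \<in> V"
proof -
  have rt: "rooted_tree V r p"
    and ch: "\<forall>v\<in>V. children V r p v \<noteq> {} \<longrightarrow> l v \<in> children V r p v"
    and ce: "\<forall>v\<in>V. (v = r \<or> last_born r p l v) \<longrightarrow> c v = {}"
    and cb: "\<forall>v\<in>V. v \<noteq> r \<and> \<not> last_born r p l v \<longrightarrow>
          (\<exists>xs. is_branch V r p xs \<and> (xs \<noteq> [] \<longrightarrow> hd xs = l (p v)) \<and> c v = set xs)"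
    using assms(1) unfolding burling_tree_def by blast+
  have nr: "x \<noteq> r" "\<not> last_born r p l x" using ce assms(2,3) by blast+
  then obtain xs where xs: "is_branch V r p xs" "xs \<noteq> [] \<longrightarrow> hd xs = l (p x)" "c x = set xs"
    using cb assms(2) by blast
  then have ne: "xs \<noteq> []" using assms(3) by auto
  then obtain t where t: "t < length xs" "xs ! t = y" using assms(3) xs(3) by (metis in_set_conv_nth)
  have px: "p x \<in> V" using rt nr assms(2) unfolding rooted_tree_def by blast
  have "x \<in> children V r p (p x)" using nr assms(2) unfolding children_def by blast
  then have "l (p x) \<in> children V r p (p x)" using ch px by blast
  then have lp: "l (p x) \<in> V" "l (p x) \<noteq> r" "p (l (p x)) = p x" unfolding children_def by blast+
  have "xs ! 0 = l (p x)" using xs(2) ne by (simp add: hd_conv_nth)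
  then show ?thesis using nr xs(1,3) t px lp by blast
qed

lemma out_arc:
  assumes bt: "burling_tree V r p l c" and "y \<in> V" "dsc p r y v n" "n > 0" "x \<in> c y"
  shows "\<exists>n'>0. dsc p r x v n'"
proof -
  from burl[OF bt assms(2,5)] obtain xs t where
    b: "y \<noteq> r" "is_branch V r p xs" "t < length xs" "xs ! t = x" "xs ! 0 = l (p y)"
      "l (p y) \<noteq> r" "p (l (p y)) = p y" by blast
  have d1: "dsc p r x (l (p y)) t" using branch_dsc[OF b(2), of 0 t] b by simp
  have d2: "dsc p r (l (p y)) (p y) 1" using dsc_one[of "l (p y)" r p] b(6,7) by simp
  have d3: "dsc p r (p y) v (n - 1)" using dsc_cmp[OF assms(3) dsc_one[OF b(1)]] assms(4) by simp
  have "dsc p r x v (t + 1 + (n - 1))" by (rule dsc_trans[OF dsc_trans[OF d1 d2] d3])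
  then show ?thesis using assms(4) by (intro exI[of _ "t + 1 + (n - 1)"]) simp
qed

lemma in_arc:
  assumes bt: "burling_tree V r p l c" and "x \<in> V" "y \<in> c x" "dsc p r y v n"
    and nd: "\<forall>n'. \<not> dsc p r x v n'"
  shows "v \<in> c x"
proof -
  from burl[OF bt assms(2,3)] obtain xs t where
    b: "x \<noteq> r" "is_branch V r p xs" "t < length xs" "xs ! t = y" "xs ! 0 = l (p x)"
      "l (p x) \<noteq> r" "p (l (p x)) = p x" "set xs = c x" by blast
  have d1: "dsc p r y (l (p x)) t" using branch_dsc[OF b(2), of 0 t] b by simp
  show ?thesis
  proof (cases "n \<le> t")
    case True
    have "dsc p r (xs ! (t - n + n)) (xs ! (t - n)) n" using branch_dsc[OF b(2), of "t - n" n] b(3) True by simp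
    then have "xs ! (t - n) = v" using True b(4) assms(4) by (simp add: dsc_def)
    then show ?thesis using b(3,8) by (metis nth_mem less_imp_diff_less)
  next
    case False
    have "dsc p r (l (p x)) v (n - t)" using dsc_cmp[OF assms(4) d1] False by simp
    from dsc_cmp[OF this dsc_one[OF b(6)]] False b(7)
    have "dsc p r (p x) v (n - t - 1)" by simp
    from dsc_trans[OF dsc_one[OF b(1)] this] nd show ?thesis by blast
  qed
qed

lemma v_out:
  assumes bt: "burling_tree V r p l c" and "v \<in> V" "z \<in> c v" "dsc p r z v n \<or> dsc p r v z n"
  shows False
proof -
  have rt: "rooted_tree V r p" using bt unfolding burling_tree_def by blast
  from burl[OF bt assms(2,3)] obtain xs t where
    b: "v \<noteq> r" "\<not> last_born r p l v" "is_branch V r p xs" "t < length xs" "xs ! t = z" "xs ! 0 = l (p v)"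
      "l (p v) \<noteq> r" "p (l (p v)) = p v" "l (p v) \<in> V" by blast
  have d1: "dsc p r z (l (p v)) t" using branch_dsc[OF b(3), of 0 t] b by simp
  have "v = l (p v)"
  proof -
    { fix e assume "dsc p r v (l (p v)) e"
      then have ?thesis using sib[OF rt assms(2) b(9) b(1) b(7)] b(8) by simp }
    moreover
    { fix e assume "dsc p r (l (p v)) v e"
      then have ?thesis using sib[OF rt b(9) assms(2) b(7) b(1)] b(8) by metis }
    moreover
    { assume a: "dsc p r z v n"
      have "\<exists>e. dsc p r v (l (p v)) e \<or> dsc p r (l (p v)) v e"
      proof (cases "n \<le> t")
        case True then show ?thesis using dsc_cmp[OF d1 a] by blast
      next
        case False then show ?thesis using dsc_cmp[OF a d1] by auto
      qed }
    moreover
    { assume a: "dsc p r v z n"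
      have "\<exists>e. dsc p r v (l (p v)) e" using dsc_trans[OF a d1] by blast }
    ultimately show ?thesis using assms(4) by blast
  qed
  then show False using b(1,2) unfolding last_born_def by simp
qed

lemma not_in_u:
  assumes bt: "burling_tree V r p l c" and "x \<in> V" "v \<in> c x" "dsc p r v x d"
  shows False
proof -
  have rt: "rooted_tree V r p" using bt unfolding burling_tree_def by blast
  from burl[OF bt assms(2,3)] obtain xs t where
    b: "x \<noteq> r" "\<not> last_born r p l x" "is_branch V r p xs" "t < length xs" "xs ! t = v" "xs ! 0 = l (p x)"
      "l (p x) \<noteq> r" "p (l (p x)) = p x" "l (p x) \<in> V" by blast
  have d1: "dsc p r v (l (p x)) t" using branch_dsc[OF b(3), of 0 t] b by simp
  have "x = l (p x)"
  proof (cases "d \<le> t")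
    case True
    from dsc_cmp[OF d1 assms(4) True] show ?thesis using sib[OF rt assms(2) b(9) b(1) b(7)] b(8) by simp
  next
    case False
    from dsc_cmp[OF assms(4) d1] False have "dsc p r (l (p x)) x (d - t)" by simp
    then show ?thesis using sib[OF rt b(9) assms(2) b(7) b(1)] b(8) by metis
  qed
  then show False using b(1,2) unfolding last_born_def by simp
qed

lemma path_hits:
  assumes bt: "burling_tree V r p l c" and SV: "S \<subseteq> V"
    and pa: "is_path S (derived_arcs S c) ps" and hu: "hd ps = u" and lw: "last ps = w"
    and nu: "\<forall>n. \<not> dsc p r u v n" and dw: "dsc p r w v nw" and wv: "w \<noteq> v" and vS: "v \<in> S"
  shows "\<exists>x\<in>set ps. x \<in> in_nbrs S (derived_arcs S c) v"
proof -
  define Q where "Q = {q. q < length ps \<and> \<not> (\<exists>n. dsc p r (ps ! q) v n)}"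
  have ne: "ps \<noteq> []" and sub: "set ps \<subseteq> S"
    and ad: "\<And>i. Suc i < length ps \<Longrightarrow> adj (derived_arcs S c) (ps ! i) (ps ! Suc i)"
    using pa unfolding is_path_def by auto
  have inS: "\<And>i. i < length ps \<Longrightarrow> ps ! i \<in> S" using sub by auto
  have "0 \<in> Q" using ne hu nu unfolding Q_def by (auto simp: hd_conv_nth)
  moreover have fQ: "finite Q" unfolding Q_def by auto
  ultimately have qQ: "Max Q \<in> Q" and qmax: "\<And>q'. q' \<in> Q \<Longrightarrow> q' \<le> Max Q"
    by (auto intro: Max_in)
  define q where "q = Max Q"
  have lastn: "ps ! (length ps - 1) = w" using lw ne by (simp add: last_conv_nth)
  have "length ps - 1 \<notin> Q" using lastn dw unfolding Q_def by auto
  moreover have "q \<in> Q" using qQ unfolding q_def .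
  ultimately have "q \<noteq> length ps - 1" "q < length ps" unfolding Q_def by auto
  then have sq: "Suc q < length ps" by linarith
  have after: "\<exists>n. dsc p r (ps ! q') v n" if "q < q'" "q' < length ps" for q'
  proof (rule ccontr)
    assume "\<not> ?thesis"
    then have "q' \<in> Q" using that unfolding Q_def by blast
    then show False using qmax that unfolding q_def by fastforce
  qed
  have nq: "\<not> (\<exists>n. dsc p r (ps ! q) v n)" using qQ unfolding q_def Q_def by blast
  obtain n where dy: "dsc p r (ps ! Suc q) v n" using after[of "Suc q"] sq by blast
  have xS: "ps ! q \<in> S" "ps ! Suc q \<in> S" using inS sq by auto
  have a: "adj (derived_arcs S c) (ps ! q) (ps ! Suc q)" using ad sq by blast
  show ?thesis
  proof (cases "ps ! Suc q = v")
    case False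
    then have n0: "n > 0" using dy by (cases n) (auto simp: dsc_def)
    from a have "ps ! Suc q \<in> c (ps ! q) \<or> ps ! q \<in> c (ps ! Suc q)"
      unfolding adj_def derived_arcs_def by blast
    then show ?thesis
    proof
      assume "ps ! Suc q \<in> c (ps ! q)"
      from in_arc[OF bt _ this dy] nq xS SV have "v \<in> c (ps ! q)" by blast
      then have "ps ! q \<in> in_nbrs S (derived_arcs S c) v"
        using xS vS unfolding in_nbrs_def derived_arcs_def by blast
      then show ?thesis using sq by (meson Suc_lessD nth_mem)
    next
      assume "ps ! q \<in> c (ps ! Suc q)"
      from out_arc[OF bt _ dy n0 this] xS SV nq show ?thesis by blast
    qed
  next
    case True
    have ssq: "Suc (Suc q) < length ps"
    proof (rule ccontr)
      assume "\<not> ?thesis"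
      then have "Suc q = length ps - 1" using sq by simp
      then show False using lastn True wv by simp
    qed
    obtain nz where dz: "dsc p r (ps ! Suc (Suc q)) v nz" using after[of "Suc (Suc q)"] ssq by auto
    have zS: "ps ! Suc (Suc q) \<in> S" using inS ssq by blast
    have "adj (derived_arcs S c) v (ps ! Suc (Suc q))" using ad[OF ssq] True by simp
    then have "ps ! Suc (Suc q) \<in> c v \<or> v \<in> c (ps ! Suc (Suc q))"
      unfolding adj_def derived_arcs_def by blast
    then show ?thesis
    proof
      assume "ps ! Suc (Suc q) \<in> c v"
      with v_out[OF bt _ this] dz vS SV show ?thesis by blast
    next
      assume "v \<in> c (ps ! Suc (Suc q))"
      then have "ps ! Suc (Suc q) \<in> in_nbrs S (derived_arcs S c) v"
        using zS vS unfolding in_nbrs_def derived_arcs_def by blast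
      then show ?thesis using ssq by (meson nth_mem)
    qed
  qed
qed

lemma path_mono: "is_path (S - X) E xs \<Longrightarrow> is_path S E xs"
  unfolding is_path_def by auto

theorem lemma5p3:
  fixes V S :: "'a set" and r u v w :: 'a and p l :: "'a \<Rightarrow> 'a"
    and c :: "'a \<Rightarrow> 'a set" and bs :: "'a list" and i j k :: nat
  assumes "burling_tree V r p l c"
    and "S \<subseteq> V"
    and "is_branch V r p bs"
    and "i < j" and "j < k" and "k < length bs"
    and "bs ! i = u" and "bs ! j = v" and "bs ! k = w"
    and "distinct [u, v, w]"
    and "u \<in> S" and "v \<in> S" and "w \<in> S"
  shows "(\<forall>xs. is_path S (derived_arcs S c) xs \<and> hd xs = u \<and> last xs = w \<longrightarrow>
            (\<exists>x\<in>set xs. x \<in> in_nbrs S (derived_arcs S c) v))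
    \<and> full_in_star_cutset S (derived_arcs S c) (closed_in_nbhd S (derived_arcs S c) v)
    \<and> separates S (derived_arcs S c) (closed_in_nbhd S (derived_arcs S c) v) u w
    \<and> full_star_cutset S (derived_arcs S c) (closed_nbhd S (derived_arcs S c) v)
    \<and> separates S (derived_arcs S c) (closed_nbhd S (derived_arcs S c) v) u w"
proof -
  note bt = assms(1)
  let ?E = "derived_arcs S c"
  have rt: "rooted_tree V r p" using bt unfolding burling_tree_def by blast
  have V: "u \<in> V" "v \<in> V" "w \<in> V" using assms(2,11,12,13) by auto
  have dvu: "dsc p r v u (j - i)" using branch_dsc[OF assms(3), of i "j - i"] assms by simp
  have dwv: "dsc p r w v (k - j)" using branch_dsc[OF assms(3), of j "k - j"] assms by simp
  have nu: "\<forall>n. \<not> dsc p r u v n"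
  proof (intro allI notI)
    fix n assume "dsc p r u v n"
    from dsc_trans[OF dvu this] nocycle[OF rt V(2), of "j - i + n"] assms(4) show False by simp
  qed
  have wv: "w \<noteq> v" using assms(10) by auto
  have P1: "\<forall>xs. is_path S ?E xs \<and> hd xs = u \<and> last xs = w \<longrightarrow>
            (\<exists>x\<in>set xs. x \<in> in_nbrs S ?E v)"
    using path_hits[OF bt assms(2) _ _ _ nu dwv wv assms(12)] by blast
  have uin: "\<not> ?E u v" using not_in_u[OF bt V(1) _ dvu] unfolding derived_arcs_def by blast
  have win: "\<not> ?E w v"
  proof
    assume "?E w v"
    then have "v \<in> c w" unfolding derived_arcs_def by blast
    from out_arc[OF bt V(3) dwv _ this] assms(5) obtain n' where "n' > 0" "dsc p r v v n'" by auto
    then show False using nocycle[OF rt V(2)] by blast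
  qed
  have uout: "\<not> ?E v u" using v_out[OF bt V(2), of u] dvu unfolding derived_arcs_def by blast
  have wout: "\<not> ?E v w" using v_out[OF bt V(2), of w] dwv unfolding derived_arcs_def by blast
  have uv: "u \<noteq> v" using assms(10) by auto
  define X1 where "X1 = closed_in_nbhd S ?E v"
  define X2 where "X2 = closed_nbhd S ?E v"
  have X1: "u \<in> S - X1" "w \<in> S - X1" "in_nbrs S ?E v \<subseteq> X1"
    using uin win uv wv assms(11,13) unfolding X1_def closed_in_nbhd_def in_nbrs_def by auto
  have X2: "u \<in> S - X2" "w \<in> S - X2" "in_nbrs S ?E v \<subseteq> X2"
    using uin win uout wout uv wv assms(11,13) unfolding X2_def closed_nbhd_def in_nbrs_def adj_def
    by auto
  have sep: "separates S ?E X u w" if "u \<in> S - X" "w \<in> S - X" "in_nbrs S ?E v \<subseteq> X" for X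
  proof -
    have "\<not> connected_in (S - X) ?E u w"
    proof
      assume "connected_in (S - X) ?E u w"
      then obtain xs where xs: "is_path (S - X) ?E xs" "hd xs = u" "last xs = w"
        unfolding connected_in_def by blast
      then obtain x where "x \<in> set xs" "x \<in> in_nbrs S ?E v" using P1 path_mono by blast
      moreover have "set xs \<subseteq> S - X" using xs(1) unfolding is_path_def by blast
      ultimately show False using that(3) by blast
    qed
    then show ?thesis using that unfolding separates_def by blast
  qed
  have s1: "separates S ?E X1 u w" using sep X1 by blast
  have s2: "separates S ?E X2 u w" using sep X2 by blast
  have c1: "full_in_star_cutset S ?E X1"
    using s1 assms(12) unfolding full_in_star_cutset_def disconnected_def separates_def X1_def by blast
  have c2: "full_star_cutset S ?E X2"
    using s2 assms(12) unfolding full_star_cutset_def disconnected_def separates_def X2_def by blast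
  show ?thesis using P1 s1 s2 c1 c2 unfolding X1_def X2_def by blast
qed

end
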